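(* Let $p\ge 1$ be an integer, $t\ge 2$, let $n_1,\dots,n_t$ be positive integers, and let $G=K_{n_1,\dots,n_t}$ be the complete $t$-partite graph with partite sets $V_1,\dots,V_t$, $|V_i|=n_i$. Let $N_t=\{1,\dots,t\}$ and $f(I)=\sum_{i\in I}n_i$ for $I\subseteq N_t$, and assume $f(N_t)>p$. Then $$\gamma_p(G)=\min\{s_1,\ p+s_2\}.$$
   Context: A set $S\subseteq V(G)$ is a $p$-dominating set of $G$ if every vertex $v\in V(G)\setminus S$ has at least $p$ neighbors in $S$; $\gamma_p(G)$ is the minimum cardinality of a $p$-dominating set of $G$. Define $s_1=\min\{f(I): I\subseteq N_t,\ f(I)\ge p\}$. Define the family $$\mathscr{I}_p=\Big\{I\subset N_t:\ |I|\le t-2,\ f(I)<p,\ \text{and } \Big\lceil\tfrac{p-f(I)}{t-|I|-1}\Big\rceil\le n_i \text{ for each } i\in N_t\setminus I\Big\},$$ and $s_2=\min\{\lceil\frac{p-f(I)}{t-|I|-1}\rceil: I\in\mathscr{I}_p\}$ if $\mathscr{I}_p\ne\emptyset$, and $s_2=\infty$ if $\mathscr{I}_p=\emptyset$. *)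

theory Defs
  imports Main "HOL-Library.Extended_Nat"
begin

text \<open>A graph is given by a vertex set V and a symmetric adjacency relation E.\<close>

definition p_dominating :: "'a set \<Rightarrow> ('a \<Rightarrow> 'a \<Rightarrow> bool) \<Rightarrow> nat \<Rightarrow> 'a set \<Rightarrow> bool" where
  "p_dominating V E p S \<longleftrightarrow> S \<subseteq> V \<and> (\<forall>v \<in> V - S. card {u \<in> S. E v u} \<ge> p)"

definition gamma_p :: "'a set \<Rightarrow> ('a \<Rightarrow> 'a \<Rightarrow> bool) \<Rightarrow> nat \<Rightarrow> nat" where
  "gamma_p V E p = Min {card S | S. p_dominating V E p S}"

text \<open>Complete t-partite graph K_{n_1,...,n_t}: vertex (i,j) lies in part V_i, j < n i;
  two vertices are adjacent iff they lie in different parts.\<close>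

definition kpart_V :: "nat \<Rightarrow> (nat \<Rightarrow> nat) \<Rightarrow> (nat \<times> nat) set" where
  "kpart_V t n = {(i, j). i \<in> {1..t} \<and> j < n i}"

definition kpart_E :: "nat \<times> nat \<Rightarrow> nat \<times> nat \<Rightarrow> bool" where
  "kpart_E x y \<longleftrightarrow> fst x \<noteq> fst y"

definition fsum :: "(nat \<Rightarrow> nat) \<Rightarrow> nat set \<Rightarrow> nat" where
  "fsum n I = (\<Sum>i\<in>I. n i)"

definition s1 :: "nat \<Rightarrow> (nat \<Rightarrow> nat) \<Rightarrow> nat \<Rightarrow> nat" where
  "s1 t n p = Min {fsum n I | I. I \<subseteq> {1..t} \<and> fsum n I \<ge> p}"

definition qI :: "nat \<Rightarrow> (nat \<Rightarrow> nat) \<Rightarrow> nat \<Rightarrow> nat set \<Rightarrow> nat" where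
  "qI t n p I = nat \<lceil>(real p - real (fsum n I)) / (real t - real (card I) - 1)\<rceil>"

definition Ip :: "nat \<Rightarrow> (nat \<Rightarrow> nat) \<Rightarrow> nat \<Rightarrow> nat set set" where
  "Ip t n p = {I. I \<subset> {1..t} \<and> card I + 2 \<le> t \<and> fsum n I < p \<and>
                  (\<forall>i \<in> {1..t} - I. qI t n p I \<le> n i)}"

definition s2 :: "nat \<Rightarrow> (nat \<Rightarrow> nat) \<Rightarrow> nat \<Rightarrow> enat" where
  "s2 t n p = (if Ip t n p = {} then \<infinity> else enat (Min (qI t n p ` Ip t n p)))"

end

theory Submission
  imports Defs
begin

lemma fill:
  fixes c :: "nat \<Rightarrow> nat"
  assumes "finite K" "T \<le> sum c K"
  shows "\<exists>a. (\<forall>i\<in>K. a i \<le> c i) \<and> sum a K = T"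
  using assms
proof (induction K arbitrary: T rule: finite_induct)
  case empty
  then show ?case by auto
next
  case (insert x K)
  have "T - min T (c x) \<le> sum c K" using insert by auto
  then obtain a where a: "\<forall>i\<in>K. a i \<le> c i" "sum a K = T - min T (c x)" using insert.IH by blast
  let ?a = "a(x := min T (c x))"
  have "sum ?a K = sum a K" using insert(2) by (intro sum.cong) auto
  hence "sum ?a (insert x K) = T" using insert(1,2) a by simp
  moreover have "\<forall>i\<in>insert x K. ?a i \<le> c i" using a by auto
  ultimately show ?case by blast
qed

lemma V_eq: "kpart_V t n = Sigma {1..t} (\<lambda>i. {..<n i})"
  unfolding kpart_V_def by auto

lemma finV: "finite (kpart_V t n)"
  unfolding V_eq by auto

lemma dom_b:
  assumes "\<forall>i\<in>{1..t}. b i \<le> n i"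
    and "\<forall>i\<in>{1..t}. b i < n i \<longrightarrow> p \<le> sum b ({1..t} - {i})"
  shows "p_dominating (kpart_V t n) kpart_E p (Sigma {1..t} (\<lambda>i. {..<b i}))"
proof -
  let ?S = "Sigma {1..t} (\<lambda>i. {..<b i})"
  have sub: "?S \<subseteq> kpart_V t n" using assms(1) unfolding kpart_V_def by force
  have "card {u \<in> ?S. kpart_E v u} \<ge> p" if v: "v \<in> kpart_V t n - ?S" for v
  proof -
    obtain i l where vi: "v = (i,l)" by (cases v)
    have i: "i \<in> {1..t}" "l < n i" "\<not> l < b i" using v vi unfolding kpart_V_def by auto
    have "{u \<in> ?S. kpart_E v u} = Sigma ({1..t} - {i}) (\<lambda>i. {..<b i})"
      using vi unfolding kpart_E_def by auto
    moreover have "card (Sigma ({1..t} - {i}) (\<lambda>i. {..<b i})) = sum b ({1..t} - {i})"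
      by (simp add: card_SigmaI)
    ultimately show ?thesis using assms(2) i by auto
  qed
  then show ?thesis using sub unfolding p_dominating_def by blast
qed

lemma gamma_le:
  assumes "p_dominating (kpart_V t n) kpart_E p S"
  shows "gamma_p (kpart_V t n) kpart_E p \<le> card S"
proof -
  have "{card S | S. p_dominating (kpart_V t n) kpart_E p S} \<subseteq> card ` Pow (kpart_V t n)"
    unfolding p_dominating_def by auto
  hence "finite {card S | S. p_dominating (kpart_V t n) kpart_E p S}"
    using finV finite_subset by blast
  then show ?thesis unfolding gamma_p_def using assms by (intro Min_le) auto
qed

lemma gamma_in:
  "\<exists>S. p_dominating (kpart_V t n) kpart_E p S \<and> gamma_p (kpart_V t n) kpart_E p = card S"
proof -
  have "{card S | S. p_dominating (kpart_V t n) kpart_E p S} \<subseteq> card ` Pow (kpart_V t n)"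
    unfolding p_dominating_def by auto
  hence "finite {card S | S. p_dominating (kpart_V t n) kpart_E p S}"
    using finV finite_subset by blast
  moreover have "p_dominating (kpart_V t n) kpart_E p (kpart_V t n)"
    unfolding p_dominating_def by auto
  ultimately have "gamma_p (kpart_V t n) kpart_E p \<in> {card S | S. p_dominating (kpart_V t n) kpart_E p S}"
    unfolding gamma_p_def by (intro Min_in) auto
  then show ?thesis by auto
qed

lemma s1_le:
  assumes "I \<subseteq> {1..t}" "p \<le> fsum n I"
  shows "s1 t n p \<le> fsum n I"
proof -
  have "{fsum n I | I. I \<subseteq> {1..t} \<and> fsum n I \<ge> p} \<subseteq> fsum n ` Pow {1..t}" by auto
  hence "finite {fsum n I | I. I \<subseteq> {1..t} \<and> fsum n I \<ge> p}" using finite_subset by blast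
  then show ?thesis unfolding s1_def using assms by (intro Min_le) auto
qed

lemma s2_le:
  assumes "I \<in> Ip t n p"
  shows "s2 t n p \<le> enat (qI t n p I)"
proof -
  have "Ip t n p \<subseteq> Pow {1..t}" unfolding Ip_def by auto
  hence "finite (Ip t n p)" using finite_subset by blast
  then show ?thesis unfolding s2_def using assms by auto
qed

lemma qI_le:
  assumes "card I + 2 \<le> t" "p - fsum n I \<le> (t - card I - 1) * m"
  shows "qI t n p I \<le> m"
proof -
  let ?d = "real t - real (card I) - 1"
  have d: "?d > 0" using assms(1) by linarith
  have dd: "real (t - card I - 1) = ?d" using assms(1) by (simp add: of_nat_diff)
  have "real (p - fsum n I) \<le> ?d * real m" using assms(2) dd
    by (metis of_nat_le_iff of_nat_mult)
  moreover have "real p - real (fsum n I) \<le> real (p - fsum n I)" by simp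
  ultimately have "(real p - real (fsum n I)) / ?d \<le> real m" using d
    by (simp add: divide_le_eq mult.commute)
  then show ?thesis unfolding qI_def by simp
qed

lemma qI_ge:
  assumes "card I + 2 \<le> t" "fsum n I < p"
  shows "p - fsum n I \<le> (t - card I - 1) * qI t n p I"
proof -
  let ?d = "real t - real (card I) - 1"
  let ?x = "(real p - real (fsum n I)) / ?d"
  have d: "?d > 0" using assms(1) by linarith
  have dd: "real (t - card I - 1) = ?d" using assms(1) by (simp add: of_nat_diff)
  have x0: "?x \<ge> 0" using d assms(2) by simp
  have "?x \<le> of_int \<lceil>?x\<rceil>" by (rule le_of_int_ceiling)
  moreover have "real (qI t n p I) = of_int \<lceil>?x\<rceil>" unfolding qI_def using x0 by simp
  ultimately have "?x \<le> real (qI t n p I)" by simp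
  hence "real p - real (fsum n I) \<le> ?d * real (qI t n p I)" using d
    by (simp add: divide_le_eq mult.commute)
  hence "real (p - fsum n I) \<le> real ((t - card I - 1) * qI t n p I)"
    using assms(2) dd by (simp add: of_nat_diff)
  then show ?thesis by linarith
qed


lemma L:
  assumes "I \<subseteq> {1..t}" "fsum n I \<le> p + m"
    "p + m \<le> fsum n I + (\<Sum>i\<in>{1..t}-I. min m (n i))"
  shows "min (enat (s1 t n p)) (enat p + s2 t n p) \<le> enat (p+m)"
  using assms
proof (induction "card ({1..t} - I)" arbitrary: I rule: less_induct)
  case less
  let ?N = "{1..t}"
  have finI: "finite I" using less.prems(1) finite_subset by blast
  show ?case
  proof (cases "p \<le> fsum n I")
    case True
    then have "s1 t n p \<le> fsum n I" by (rule s1_le[OF less.prems(1)])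
    then show ?thesis using less.prems(2) by (simp add: min_le_iff_disj)
  next
    case False
    define k where "k = card (?N - I)"
    have cardI: "card I \<le> t" using card_mono[OF finite_atLeastAtMost less.prems(1)] by simp
    have kc: "k = t - card I" unfolding k_def using less.prems(1) finI
      by (simp add: card_Diff_subset)
    have summ: "(\<Sum>i\<in>?N-I. min m (n i)) \<le> k * m" unfolding k_def
      using sum_bounded_above[of "?N - I" "\<lambda>i. min m (n i)" m] by simp
    have k2: "k \<ge> 2"
    proof (rule ccontr)
      assume "\<not> k \<ge> 2"
      hence "k * m \<le> m" by (cases k) auto
      then show False using summ less.prems(3) False by linarith
    qed
    have t2: "card I + 2 \<le> t" using kc k2 cardI by linarith
    have "p + m \<le> fsum n I + k * m" using summ less.prems(3) by linarith
    hence "p - fsum n I \<le> (k - 1) * m" using k2 by (simp add: diff_mult_distrib)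
    hence km: "p - fsum n I \<le> (t - card I - 1) * m" using kc by simp
    have qle: "qI t n p I \<le> m" by (rule qI_le[OF t2 km])
    show ?thesis
    proof (cases "\<forall>i\<in>?N - I. qI t n p I \<le> n i")
      case True
      have "?N - I \<noteq> {}" using k2 unfolding k_def by (metis card.empty not_numeral_le_zero)
      hence "I \<subset> ?N" using less.prems(1) by auto
      hence "I \<in> Ip t n p" unfolding Ip_def using t2 False True by auto
      then have "s2 t n p \<le> enat (qI t n p I)" by (rule s2_le)
      then have "enat p + s2 t n p \<le> enat p + enat (qI t n p I)"
        by (rule add_left_mono)
      also have "\<dots> \<le> enat (p+m)" using qle by simp
      finally have "enat p + s2 t n p \<le> enat (p+m)" .
      then show ?thesis by (simp add: min_le_iff_disj)
    next
      case False2: False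
      then obtain j where j: "j \<in> ?N - I" "n j < qI t n p I" by auto
      let ?I' = "insert j I"
      have ps: "?N - ?I' \<subset> ?N - I" using j by blast
      have lt: "card (?N - ?I') < card (?N - I)"
        by (rule psubset_card_mono[OF _ ps]) simp
      have f': "fsum n ?I' = n j + fsum n I" unfolding fsum_def using j finI by simp
      have "?N - ?I' = (?N - I) - {j}" by auto
      hence sum': "(\<Sum>i\<in>?N - I. min m (n i)) = min m (n j) + (\<Sum>i\<in>?N - ?I'. min m (n i))"
        using j by (simp add: sum.remove)
      have "min m (n j) = n j" using j qle by simp
      show ?thesis
      proof (rule less.hyps[OF lt])
        show "?I' \<subseteq> ?N" using j less.prems(1) by auto
        show "fsum n ?I' \<le> p + m" using f' j qle False by linarith
        show "p + m \<le> fsum n ?I' + (\<Sum>i\<in>?N - ?I'. min m (n i))"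
          using f' sum' less.prems(3) \<open>min m (n j) = n j\<close> by linarith
      qed
    qed
  qed
qed


lemma lower:
  assumes dom: "p_dominating (kpart_V t n) kpart_E p S" and big: "fsum n {1..t} > p"
  shows "min (enat (s1 t n p)) (enat p + s2 t n p) \<le> enat (card S)"
proof -
  let ?N = "{1..t}"
  define a where "a i = card {j. (i,j) \<in> S}" for i
  have SV: "S \<subseteq> kpart_V t n" using dom unfolding p_dominating_def by auto
  have slice_sub: "{j. (i,j) \<in> S} \<subseteq> {..<n i}" for i using SV unfolding kpart_V_def by auto
  have fin_slice: "finite {j. (i,j) \<in> S}" for i using slice_sub finite_subset by blast
  have a_le: "a i \<le> n i" for i unfolding a_def using card_mono[OF _ slice_sub] by simp
  have S_eq: "S = Sigma ?N (\<lambda>i. {j. (i,j) \<in> S})" using SV unfolding kpart_V_def by auto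
  have "card S = card (Sigma ?N (\<lambda>i. {j. (i,j) \<in> S}))" using S_eq by (rule arg_cong)
  hence cardS: "card S = sum a ?N" unfolding a_def by (simp add: card_SigmaI fin_slice)
  have key: "a i + p \<le> card S" if i: "i \<in> ?N" "a i < n i" for i
  proof -
    have "{j. (i,j) \<in> S} \<noteq> {..<n i}"
    proof
      assume "{j. (i,j) \<in> S} = {..<n i}"
      hence "a i = n i" unfolding a_def by simp
      thus False using i(2) by simp
    qed
    then obtain j where j: "j < n i" "(i,j) \<notin> S" using slice_sub by blast
    have "(i,j) \<in> kpart_V t n - S" using i j unfolding kpart_V_def by auto
    hence "p \<le> card {u \<in> S. kpart_E (i,j) u}" using dom unfolding p_dominating_def by blast
    moreover have "{u \<in> S. kpart_E (i,j) u} = Sigma (?N - {i}) (\<lambda>i. {j. (i,j) \<in> S})"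
      using S_eq unfolding kpart_E_def by auto
    moreover have "card (Sigma (?N - {i}) (\<lambda>i. {j. (i,j) \<in> S})) = sum a (?N - {i})"
      unfolding a_def by (simp add: card_SigmaI fin_slice)
    ultimately have c: "p \<le> sum a (?N - {i})" by simp
    have "sum a ?N = a i + sum a (?N - {i})" using i(1) by (simp add: sum.remove)
    thus ?thesis using cardS c by linarith
  qed
  define I where "I = {i \<in> ?N. a i = n i}"
  have IN: "I \<subseteq> ?N" unfolding I_def by auto
  have "sum a ?N = sum a (?N - I) + sum a I" using IN by (simp add: sum.subset_diff)
  moreover have "sum a I = fsum n I" unfolding fsum_def I_def by simp
  ultimately have cS: "card S = fsum n I + sum a (?N - I)" using cardS by simp
  show ?thesis
  proof (cases "p \<le> fsum n I")
    case True
    then have "s1 t n p \<le> fsum n I" by (rule s1_le[OF IN])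
    then show ?thesis using cS by (simp add: min_le_iff_disj)
  next
    case False
    have "?N - I \<noteq> {}"
    proof
      assume "?N - I = {}"
      hence "I = ?N" using IN by auto
      thus False using False big by simp
    qed
    then obtain i0 where i0: "i0 \<in> ?N - I" by blast
    have lt: "a i < n i" if "i \<in> ?N - I" for i using that a_le[of i] unfolding I_def
      by (simp add: order_less_le)
    have "p \<le> card S" using key[of i0] lt[OF i0] i0 by simp
    define m where "m = card S - p"
    have pm: "card S = p + m" unfolding m_def using \<open>p \<le> card S\<close> by simp
    have "a i \<le> min m (n i)" if "i \<in> ?N - I" for i
      using key[of i] lt[OF that] that a_le[of i] pm by auto
    hence "sum a (?N - I) \<le> (\<Sum>i\<in>?N-I. min m (n i))" by (rule sum_mono)
    hence "p + m \<le> fsum n I + (\<Sum>i\<in>?N-I. min m (n i))" using cS pm by linarith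
    moreover have "fsum n I \<le> p + m" using False by simp
    ultimately show ?thesis using L[OF IN] pm by simp
  qed
qed

lemma upper1:
  assumes "I \<subseteq> {1..t}" "p \<le> fsum n I" "\<forall>i \<in> {1..t}. n i > 0"
  shows "gamma_p (kpart_V t n) kpart_E p \<le> fsum n I"
proof -
  let ?N = "{1..t}"
  define b where "b i = (if i \<in> I then n i else 0)" for i
  have sb: "sum b ?N = fsum n I"
  proof -
    have "sum b ?N = sum n (?N \<inter> I)" unfolding b_def by (rule sum.inter_restrict[symmetric]) simp
    also have "?N \<inter> I = I" using assms(1) by auto
    finally show ?thesis unfolding fsum_def .
  qed
  have "p_dominating (kpart_V t n) kpart_E p (Sigma ?N (\<lambda>i. {..<b i}))"
  proof (rule dom_b)
    show "\<forall>i\<in>?N. b i \<le> n i" unfolding b_def by auto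
    show "\<forall>i\<in>?N. b i < n i \<longrightarrow> p \<le> sum b (?N - {i})"
    proof (intro ballI impI)
      fix i assume i: "i \<in> ?N" "b i < n i"
      hence "b i = 0" unfolding b_def by (cases "i \<in> I") auto
      hence "sum b ?N = b i + sum b (?N - {i})" using i(1) by (simp add: sum.remove)
      thus "p \<le> sum b (?N - {i})" using sb assms(2) \<open>b i = 0\<close> by simp
    qed
  qed
  hence "gamma_p (kpart_V t n) kpart_E p \<le> card (Sigma ?N (\<lambda>i. {..<b i}))" by (rule gamma_le)
  also have "\<dots> = sum b ?N" by (simp add: card_SigmaI)
  finally show ?thesis using sb by simp
qed

lemma upper2:
  assumes I: "I \<in> Ip t n p"
  shows "gamma_p (kpart_V t n) kpart_E p \<le> p + qI t n p I"
proof -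
  let ?N = "{1..t}"
  let ?q = "qI t n p I"
  have IN: "I \<subseteq> ?N" and t2: "card I + 2 \<le> t" and fl: "fsum n I < p"
    and qn: "\<forall>i\<in>?N - I. ?q \<le> n i" using I unfolding Ip_def by auto
  have finI: "finite I" using IN finite_subset by blast
  have cd: "card (?N - I) = t - card I" using IN finI by (simp add: card_Diff_subset)
  have qg: "p - fsum n I \<le> (t - card I - 1) * ?q" by (rule qI_ge[OF t2 fl])
  have "p - fsum n I + ?q \<le> (t - card I) * ?q"
  proof -
    have "t - card I = Suc (t - card I - 1)" using t2 by arith
    hence "(t - card I) * ?q = (t - card I - 1) * ?q + ?q"
      by (metis add.commute mult_Suc)
    thus ?thesis using qg by linarith
  qed
  hence "p - fsum n I + ?q \<le> sum (\<lambda>_. ?q) (?N - I)" using cd by simp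
  then obtain a where a: "\<forall>i\<in>?N - I. a i \<le> ?q" "sum a (?N - I) = p - fsum n I + ?q"
    using fill[of "?N - I" "p - fsum n I + ?q" "\<lambda>_. ?q"] by auto
  define b where "b i = (if i \<in> I then n i else a i)" for i
  have "sum b ?N = sum b (?N - I) + sum b I" using IN by (simp add: sum.subset_diff)
  moreover have "sum b I = fsum n I" unfolding b_def fsum_def by simp
  moreover have "sum b (?N - I) = sum a (?N - I)" unfolding b_def by simp
  ultimately have sb: "sum b ?N = p + ?q" using a(2) fl by simp
  have "p_dominating (kpart_V t n) kpart_E p (Sigma ?N (\<lambda>i. {..<b i}))"
  proof (rule dom_b)
    show "\<forall>i\<in>?N. b i \<le> n i"
    proof
      fix i assume i: "i \<in> ?N"
      show "b i \<le> n i"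
      proof (cases "i \<in> I")
        case True thus ?thesis unfolding b_def by simp
      next
        case False
        hence "a i \<le> ?q" "?q \<le> n i" using a(1) qn i by auto
        thus ?thesis unfolding b_def using False by simp
      qed
    qed
    show "\<forall>i\<in>?N. b i < n i \<longrightarrow> p \<le> sum b (?N - {i})"
    proof (intro ballI impI)
      fix i assume i: "i \<in> ?N" "b i < n i"
      have "i \<notin> I" using i(2) unfolding b_def by (cases "i \<in> I") auto
      hence "b i \<le> ?q" using a(1) i(1) unfolding b_def by simp
      moreover have "sum b ?N = b i + sum b (?N - {i})" using i(1) by (simp add: sum.remove)
      ultimately show "p \<le> sum b (?N - {i})" using sb by linarith
    qed
  qed
  hence "gamma_p (kpart_V t n) kpart_E p \<le> card (Sigma ?N (\<lambda>i. {..<b i}))" by (rule gamma_le)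
  also have "\<dots> = sum b ?N" by (simp add: card_SigmaI)
  finally show ?thesis using sb by simp
qed

theorem theorem9:
  fixes p t :: nat and n :: "nat \<Rightarrow> nat"
  assumes "p \<ge> 1" and "t \<ge> 2"
    and "\<forall>i \<in> {1..t}. n i > 0"
    and "fsum n {1..t} > p"
  shows "enat (gamma_p (kpart_V t n) kpart_E p) = min (enat (s1 t n p)) (enat p + s2 t n p)"
proof (rule antisym)
  let ?g = "gamma_p (kpart_V t n) kpart_E p"
  let ?A = "{fsum n I | I. I \<subseteq> {1..t} \<and> fsum n I \<ge> p}"
  have "?A \<subseteq> fsum n ` Pow {1..t}" by auto
  hence "finite ?A" using finite_subset by blast
  moreover have w: "fsum n {1..t} = fsum n {1..t} \<and> {1..t} \<subseteq> {1..t} \<and> p \<le> fsum n {1..t}"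
    using assms(4) by simp
  have "fsum n {1..t} \<in> ?A" by (rule CollectI, rule exI, rule w)
  hence "?A \<noteq> {}" by blast
  ultimately have "s1 t n p \<in> ?A" unfolding s1_def by (rule Min_in)
  then obtain I0 where I0: "I0 \<subseteq> {1..t}" "p \<le> fsum n I0" "s1 t n p = fsum n I0" by blast
  have g1: "?g \<le> s1 t n p" using upper1[OF I0(1,2) assms(3)] I0(3) by simp
  have g2: "enat ?g \<le> enat p + s2 t n p"
  proof (cases "Ip t n p = {}")
    case True
    then show ?thesis unfolding s2_def by simp
  next
    case False
    have "Ip t n p \<subseteq> Pow {1..t}" unfolding Ip_def by auto
    hence "finite (Ip t n p)" using finite_subset by blast
    hence "Min (qI t n p ` Ip t n p) \<in> qI t n p ` Ip t n p" using False by (intro Min_in) auto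
    then obtain J where J: "J \<in> Ip t n p" "Min (qI t n p ` Ip t n p) = qI t n p J" by auto
    have "?g \<le> p + qI t n p J" by (rule upper2[OF J(1)])
    then show ?thesis unfolding s2_def using False J(2) by simp
  qed
  show "enat ?g \<le> min (enat (s1 t n p)) (enat p + s2 t n p)" using g1 g2 by simp
  obtain S where S: "p_dominating (kpart_V t n) kpart_E p S" "?g = card S" using gamma_in by blast
  show "min (enat (s1 t n p)) (enat p + s2 t n p) \<le> enat ?g"
    using lower[OF S(1) assms(4)] S(2) by simp
qed

end
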